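(* For every $n\ge2$ and $s\in(0,1/2)$ there exists $g_s:[0,1]\to[0,1]$ such that: (i) $g_s|_{\mathcal{X}_n}\in\mathcal{G}_n^{(1)}$, i.e. the angle map of $g_s|_{\mathcal{X}_n}$ is a multilinear polynomial of degree at most $1$ in $b\in\{0,1\}^n$; (ii) $g_s\in W^{s',2}(0,1)$ for all $s'<s$, but $g_s\notin W^{s,2}(0,1)$.
   Context: $\mathcal{X}_n=\{x_i=i/2^n: i=0,\dots,2^n-1\}$; for $b\in\{0,1\}^n$, $i(b)=\sum_kb_k2^k$. The angle map of $h:\mathcal{X}_n\to[0,1]$ is $\Theta_h(b)=2\arcsin\sqrt{h(x_{i(b)})}$. Every function on $\{0,1\}^n$ has a unique expansion $\sum_{S\subseteq\{0,\dots,n-1\}}c_S\prod_{j\in S}b_j$, with degree $\max\{|S|:c_S\ne0\}$; $\mathcal{G}_n^{(d)}$ is the set of $h:\mathcal{X}_n\to[0,1]$ whose angle map has degree $\le d$. For $s\in(0,1)$, $W^{s,2}(0,1)$ is the fractional Sobolev space of $u\in L^2(0,1)$ with finite Aronszajn–Slobodeckij seminorm $|u|_{W^{s,2}}^2=\int_0^1\int_0^1\frac{|u(x)-u(y)|^2}{|x-y|^{1+2s}}dx\,dy$. *)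

theory Defs
  imports "HOL-Analysis.Analysis"
begin

text \<open>Bit vectors b in {0,1}^n, represented extensionally as functions nat => nat
  with values in {0,1} below n and 0 from n on.\<close>
definition cube :: "nat \<Rightarrow> (nat \<Rightarrow> nat) set" where
  "cube n = {b. (\<forall>k<n. b k \<in> {0,1}) \<and> (\<forall>k\<ge>n. b k = 0)}"

definition bidx :: "nat \<Rightarrow> (nat \<Rightarrow> nat) \<Rightarrow> nat" where
  "bidx n b = (\<Sum>k<n. b k * 2 ^ k)"

definition angle_map :: "nat \<Rightarrow> (real \<Rightarrow> real) \<Rightarrow> (nat \<Rightarrow> nat) \<Rightarrow> real" where
  "angle_map n h b = 2 * arcsin (sqrt (h (real (bidx n b) / 2 ^ n)))"

definition mdeg_le :: "nat \<Rightarrow> nat \<Rightarrow> ((nat \<Rightarrow> nat) \<Rightarrow> real) \<Rightarrow> bool" where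
  "mdeg_le n d f \<longleftrightarrow> (\<exists>c :: nat set \<Rightarrow> real.
      (\<forall>S. S \<subseteq> {..<n} \<and> card S > d \<longrightarrow> c S = 0) \<and>
      (\<forall>b\<in>cube n. f b = (\<Sum>S\<in>Pow {..<n}. c S * (\<Prod>j\<in>S. real (b j)))))"

definition G_class :: "nat \<Rightarrow> nat \<Rightarrow> (real \<Rightarrow> real) \<Rightarrow> bool" where
  "G_class n d h \<longleftrightarrow> (\<forall>i<(2::nat)^n. h (real i / 2 ^ n) \<in> {0..1}) \<and> mdeg_le n d (angle_map n h)"

definition in_Wsp :: "real \<Rightarrow> (real \<Rightarrow> real) \<Rightarrow> bool" where
  "in_Wsp s u \<longleftrightarrow>
     set_borel_measurable lebesgue {0<..<1} u \<and>
     set_integrable lebesgue {0<..<1} (\<lambda>x. (u x)\<^sup>2) \<and>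
     (\<integral>\<^sup>+ x. \<integral>\<^sup>+ y. indicator ({0<..<1} \<times> {0<..<1}) (x, y) *
         ennreal ((u x - u y)\<^sup>2 / \<bar>x - y\<bar> powr (1 + 2 * s)) \<partial>lebesgue \<partial>lebesgue) < \<infinity>"

end

theory Submission imports Defs begin


lemma tail_int:
  fixes d e :: real assumes "d > 0" "e < -1"
  shows "(\<integral>\<^sup>+ t. ennreal (t powr e) * indicator {d..} t \<partial>lborel) = ennreal (-(d powr (e+1))/(e+1))"
  by (rule nn_integral_has_integral_lebesgue'[OF _ has_integral_powr_to_inf[OF assms(2,1)]]) simp

lemma head_int:
  fixes l a :: real assumes "l \<ge> 0" "a > -1"
  shows "(\<integral>\<^sup>+ t. ennreal (t powr a) * indicator {0..l} t \<partial>lborel) = ennreal (l powr (a+1)/(a+1))"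
  by (rule nn_integral_has_integral_lebesgue'[OF _ has_integral_powr_from_0[OF assms(2,1)]]) simp

lemma inner_right:
  fixes x b e :: real assumes "x < b" "e < -1"
  shows "(\<integral>\<^sup>+ y. ennreal (\<bar>x - y\<bar> powr e) * indicator {b..} y \<partial>lborel) = ennreal (-((b-x) powr (e+1))/(e+1))"
proof -
  have "(\<integral>\<^sup>+ y. ennreal (\<bar>x - y\<bar> powr e) * indicator {b..} y \<partial>lborel)
      = (\<integral>\<^sup>+ t. ennreal (\<bar>x - (x + 1 * t)\<bar> powr e) * indicator {b..} (x + 1 * t) \<partial>lborel)"
    using nn_integral_real_affine[of "\<lambda>y. ennreal (\<bar>x - y\<bar> powr e) * indicator {b..} y" 1 x] by simp
  also have "\<dots> = (\<integral>\<^sup>+ t. ennreal (t powr e) * indicator {b-x..} t \<partial>lborel)"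
    using assms by (intro nn_integral_cong) (auto simp: indicator_def)
  also have "\<dots> = ennreal (-((b-x) powr (e+1))/(e+1))" using assms by (intro tail_int) auto
  finally show ?thesis .
qed

lemma inner_left:
  fixes x a e :: real assumes "a < x" "e < -1"
  shows "(\<integral>\<^sup>+ y. ennreal (\<bar>x - y\<bar> powr e) * indicator {..a} y \<partial>lborel) = ennreal (-((x-a) powr (e+1))/(e+1))"
proof -
  have "(\<integral>\<^sup>+ y. ennreal (\<bar>x - y\<bar> powr e) * indicator {..a} y \<partial>lborel)
      = (\<integral>\<^sup>+ t. ennreal (\<bar>x - (x + (-1) * t)\<bar> powr e) * indicator {..a} (x + (-1) * t) \<partial>lborel)"
    using nn_integral_real_affine[of "\<lambda>y. ennreal (\<bar>x - y\<bar> powr e) * indicator {..a} y" "-1" x] by simp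
  also have "\<dots> = (\<integral>\<^sup>+ t. ennreal (t powr e) * indicator {x-a..} t \<partial>lborel)"
    using assms by (intro nn_integral_cong) (auto simp: indicator_def)
  also have "\<dots> = ennreal (-((x-a) powr (e+1))/(e+1))" using assms by (intro tail_int) auto
  finally show ?thesis .
qed

lemma outer_left:
  fixes a b al :: real assumes "a \<le> b" "al > -1"
  shows "(\<integral>\<^sup>+ x. ennreal ((x - a) powr al) * indicator {a..b} x \<partial>lborel) = ennreal ((b-a) powr (al+1)/(al+1))"
proof -
  have "(\<integral>\<^sup>+ x. ennreal ((x - a) powr al) * indicator {a..b} x \<partial>lborel)
      = (\<integral>\<^sup>+ t. ennreal (((a + 1 * t) - a) powr al) * indicator {a..b} (a + 1 * t) \<partial>lborel)"
    using nn_integral_real_affine[of "\<lambda>x. ennreal ((x - a) powr al) * indicator {a..b} x" 1 a] by simp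
  also have "\<dots> = (\<integral>\<^sup>+ t. ennreal (t powr al) * indicator {0..b-a} t \<partial>lborel)"
    using assms by (intro nn_integral_cong) (auto simp: indicator_def)
  also have "\<dots> = ennreal ((b-a) powr (al+1)/(al+1))" using assms by (intro head_int) auto
  finally show ?thesis .
qed

lemma outer_right:
  fixes a b al :: real assumes "a \<le> b" "al > -1"
  shows "(\<integral>\<^sup>+ x. ennreal ((b - x) powr al) * indicator {a..b} x \<partial>lborel) = ennreal ((b-a) powr (al+1)/(al+1))"
proof -
  have "(\<integral>\<^sup>+ x. ennreal ((b - x) powr al) * indicator {a..b} x \<partial>lborel)
      = (\<integral>\<^sup>+ t. ennreal ((b - (b + (-1) * t)) powr al) * indicator {a..b} (b + (-1) * t) \<partial>lborel)"
    using nn_integral_real_affine[of "\<lambda>x. ennreal ((b - x) powr al) * indicator {a..b} x" "-1" b] by simp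
  also have "\<dots> = (\<integral>\<^sup>+ t. ennreal (t powr al) * indicator {0..b-a} t \<partial>lborel)"
    using assms by (intro nn_integral_cong) (auto simp: indicator_def)
  also have "\<dots> = ennreal ((b-a) powr (al+1)/(al+1))" using assms by (intro head_int) auto
  finally show ?thesis .
qed



lemma inner_bound:
  fixes a b x s :: real assumes "a < x" "x < b" "0 < s"
  shows "(\<integral>\<^sup>+ y. indicator (- {a<..<b}) y * ennreal (\<bar>x - y\<bar> powr (-(1+2 * s))) \<partial>lborel)
     \<le> ennreal (1/(2 * s)) * ennreal ((x - a) powr (-2 * s)) + ennreal (1/(2 * s)) * ennreal ((b - x) powr (-2 * s))"
proof -
  have "(\<integral>\<^sup>+ y. indicator (- {a<..<b}) y * ennreal (\<bar>x - y\<bar> powr (-(1+2 * s))) \<partial>lborel)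
     \<le> (\<integral>\<^sup>+ y. ennreal (\<bar>x - y\<bar> powr (-(1+2 * s))) * indicator {..a} y + ennreal (\<bar>x - y\<bar> powr (-(1+2 * s))) * indicator {b..} y \<partial>lborel)"
    by (intro nn_integral_mono) (auto simp: indicator_def)
  also have "\<dots> = (\<integral>\<^sup>+ y. ennreal (\<bar>x - y\<bar> powr (-(1+2 * s))) * indicator {..a} y \<partial>lborel) + (\<integral>\<^sup>+ y. ennreal (\<bar>x - y\<bar> powr (-(1+2 * s))) * indicator {b..} y \<partial>lborel)"
    by (intro nn_integral_add) auto
  also have "\<dots> = ennreal (-((x-a) powr (-(1+2 * s)+1))/(-(1+2 * s)+1)) + ennreal (-((b-x) powr (-(1+2 * s)+1))/(-(1+2 * s)+1))"
    using assms by (simp add: inner_left inner_right)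
  also have "\<dots> = ennreal (1/(2 * s)) * ennreal ((x - a) powr (-2 * s)) + ennreal (1/(2 * s)) * ennreal ((b - x) powr (-2 * s))"
    using assms by (simp add: ennreal_mult[symmetric] divide_simps)
  finally show ?thesis .
qed

lemma block_upper:
  fixes a b s :: real assumes "a < b" "0 < s" "s < 1/2"
  shows "(\<integral>\<^sup>+x. \<integral>\<^sup>+y. indicator {a<..<b} x * indicator (- {a<..<b}) y * ennreal (\<bar>x - y\<bar> powr (-(1+2 * s))) \<partial>lborel \<partial>lborel)
     \<le> ennreal ((b-a) powr (1-2 * s) / (s * (1-2 * s)))"
proof -
  have "(\<integral>\<^sup>+x. \<integral>\<^sup>+y. indicator {a<..<b} x * indicator (- {a<..<b}) y * ennreal (\<bar>x - y\<bar> powr (-(1+2 * s))) \<partial>lborel \<partial>lborel)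
    \<le> (\<integral>\<^sup>+x. ennreal (1/(2 * s)) * (ennreal ((x - a) powr (-2 * s)) * indicator {a..b} x) + ennreal (1/(2 * s)) * (ennreal ((b - x) powr (-2 * s)) * indicator {a..b} x) \<partial>lborel)"
  proof (intro nn_integral_mono)
    fix x :: real
    show "(\<integral>\<^sup>+y. indicator {a<..<b} x * indicator (- {a<..<b}) y * ennreal (\<bar>x - y\<bar> powr (-(1+2 * s))) \<partial>lborel)
       \<le> ennreal (1/(2 * s)) * (ennreal ((x - a) powr (-2 * s)) * indicator {a..b} x) + ennreal (1/(2 * s)) * (ennreal ((b - x) powr (-2 * s)) * indicator {a..b} x)"
    proof (cases "x \<in> {a<..<b}")
      case True
      then show ?thesis using inner_bound[of a x b s] assms by (simp add: mult.assoc)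
    qed simp
  qed
  also have "\<dots> = ennreal (1/(2 * s)) * (\<integral>\<^sup>+x. ennreal ((x - a) powr (-2 * s)) * indicator {a..b} x \<partial>lborel)
       + ennreal (1/(2 * s)) * (\<integral>\<^sup>+x. ennreal ((b - x) powr (-2 * s)) * indicator {a..b} x \<partial>lborel)"
    by (simp add: nn_integral_add nn_integral_cmult)
  also have "\<dots> = ennreal (1/(2 * s)) * ennreal ((b-a) powr (-2 * s+1)/(-2 * s+1)) + ennreal (1/(2 * s)) * ennreal ((b-a) powr (-2 * s+1)/(-2 * s+1))"
    using assms by (simp add: outer_left outer_right)
  also have "\<dots> = ennreal ((b-a) powr (1-2 * s) / (s * (1-2 * s)))"
    using assms by (simp add: ennreal_mult[symmetric] ennreal_plus[symmetric] divide_simps del: ennreal_plus)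
  finally show ?thesis .
qed

lemma block_lower:
  fixes a b s :: real assumes "a < b" "0 < s"
  shows "ennreal ((2 * (b-a)) powr (-(1+2 * s)) * (b-a) * (b-a)) \<le>
    (\<integral>\<^sup>+x. \<integral>\<^sup>+y. indicator {a<..<b} x * indicator {b<..<2 * b-a} y * ennreal (\<bar>x - y\<bar> powr (-(1+2 * s))) \<partial>lborel \<partial>lborel)"
proof -
  let ?C = "ennreal ((2 * (b-a)) powr (-(1+2 * s)))"
  have "(\<integral>\<^sup>+x. \<integral>\<^sup>+y. indicator {a<..<b} x * indicator {b<..<2 * b-a} y * ennreal (\<bar>x - y\<bar> powr (-(1+2 * s))) \<partial>lborel \<partial>lborel)
     \<ge> (\<integral>\<^sup>+x. \<integral>\<^sup>+y. indicator {a<..<b} x * (?C * indicator {b<..<2 * b-a} y) \<partial>lborel \<partial>lborel)"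
  proof (intro nn_integral_mono)
    fix x y :: real
    show "indicator {a<..<b} x * (?C * indicator {b<..<2 * b-a} y) \<le> indicator {a<..<b} x * indicator {b<..<2 * b-a} y * ennreal (\<bar>x - y\<bar> powr (-(1+2 * s)))"
    proof (cases "x \<in> {a<..<b} \<and> y \<in> {b<..<2 * b-a}")
      case True
      then have "\<bar>x - y\<bar> \<le> 2 * (b-a)" "0 < \<bar>x - y\<bar>" by auto
      then have "(2 * (b-a)) powr (-(1+2 * s)) \<le> \<bar>x - y\<bar> powr (-(1+2 * s))"
        using assms by (intro powr_mono2') auto
      then show ?thesis using True by (simp add: ennreal_leI)
    qed (auto simp: indicator_def)
  qed
  also have "(\<integral>\<^sup>+x. \<integral>\<^sup>+y. indicator {a<..<b} x * (?C * indicator {b<..<2 * b-a} y) \<partial>lborel \<partial>lborel)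
      = (\<integral>\<^sup>+x. (?C * ennreal (b-a)) * indicator {a<..<b} x \<partial>lborel)"
  proof -
    have inner: "(\<integral>\<^sup>+y. ?C * indicator {b<..<2 * b-a} y \<partial>lborel) = ?C * ennreal (b-a)"
      using assms by (simp add: nn_integral_cmult_indicator)
    show ?thesis
    proof (intro nn_integral_cong)
      fix x :: real
      have "(\<integral>\<^sup>+y. indicator {a<..<b} x * (?C * indicator {b<..<2 * b-a} y) \<partial>lborel)
          = indicator {a<..<b} x * (\<integral>\<^sup>+y. ?C * indicator {b<..<2 * b-a} y \<partial>lborel)"
        by (rule nn_integral_cmult) simp
      also have "\<dots> = indicator {a<..<b} x * (?C * ennreal (b-a))" by (simp only: inner)
      also have "\<dots> = (?C * ennreal (b-a)) * indicator {a<..<b} x" by (simp only: mult.commute)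
      finally show "(\<integral>\<^sup>+y. indicator {a<..<b} x * (?C * indicator {b<..<2 * b-a} y) \<partial>lborel)
          = (?C * ennreal (b-a)) * indicator {a<..<b} x" .
    qed
  qed
  also have "\<dots> = ?C * ennreal (b-a) * ennreal (b-a)"
    using assms by (simp add: nn_integral_cmult)
  also have "\<dots> = ennreal ((2 * (b-a)) powr (-(1+2 * s)) * (b-a) * (b-a))"
    using assms by (simp add: ennreal_mult)
  finally show ?thesis .
qed



lemma ennreal_term_le_suminf: "(f::nat\<Rightarrow>ennreal) j \<le> (\<Sum>i. f i)"
  using ennreal_suminf_lessD not_le_imp_less by blast

definition aseq :: "(nat \<Rightarrow> real) \<Rightarrow> nat \<Rightarrow> real" where
  "aseq l j = 2 * (\<Sum>i<j. l i)"
definition Iv :: "(nat \<Rightarrow> real) \<Rightarrow> nat \<Rightarrow> real set" where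
  "Iv l j = {aseq l j <..< aseq l j + l j}"
definition Gv :: "(nat \<Rightarrow> real) \<Rightarrow> nat \<Rightarrow> real set" where
  "Gv l j = {aseq l j + l j <..< aseq l j + 2 * l j}"
definition Eset :: "(nat \<Rightarrow> real) \<Rightarrow> real set" where
  "Eset l = (\<Union>j. Iv l j)"

lemma aseq_Suc: "aseq l (Suc j) = aseq l j + 2 * l j"
  by (simp add: aseq_def algebra_simps)

lemma aseq_mono: assumes "\<And>j. l j > 0" "i \<le> j" shows "aseq l i \<le> aseq l j"
  unfolding aseq_def using assms
  by (intro mult_left_mono sum_mono2) (auto simp: less_imp_le)

lemma aseq_nonneg: assumes "\<And>j. l j > 0" shows "0 \<le> aseq l j"
  using aseq_mono[OF assms, of 0 j] by (simp add: aseq_def)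

lemma Iv_disj: assumes "\<And>j. l j > 0" "i \<noteq> j" "x \<in> Iv l i" shows "x \<notin> Iv l j"
proof
  assume x: "x \<in> Iv l j"
  have H: False if ij: "i < j" "x \<in> Iv l i" "x \<in> Iv l j" for i j
  proof -
    have "aseq l (Suc i) \<le> aseq l j" using aseq_mono[OF assms(1)] ij by auto
    with ij show False using assms(1)[of i] by (auto simp: Iv_def aseq_Suc)
  qed
  show False using H[of i j] H[of j i] assms(2,3) x by (metis linorder_neqE_nat)
qed

lemma Gv_not_E: assumes "\<And>j. l j > 0" "y \<in> Gv l j" shows "y \<notin> Eset l"
proof
  assume "y \<in> Eset l"
  then obtain i where i: "y \<in> Iv l i" by (auto simp: Eset_def)
  show False
  proof (cases "i \<le> j")
    case True
    then have "aseq l i + l i \<le> aseq l j + l j"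
    proof (cases "i = j")
      case False
      then have "aseq l (Suc i) \<le> aseq l j" using aseq_mono[OF assms(1)] True by auto
      then show ?thesis using assms(1)[of i] assms(1)[of j] by (simp add: aseq_Suc)
    qed simp
    then show False using i assms(2) by (auto simp: Iv_def Gv_def)
  next
    case False
    then have "aseq l (Suc j) \<le> aseq l i" using aseq_mono[OF assms(1)] by auto
    then show False using i assms(2) by (auto simp: Iv_def Gv_def aseq_Suc)
  qed
qed

lemma aseq_bound: assumes "\<And>j. l j > 0" "summable l" shows "aseq l j \<le> 2 * suminf l"
  unfolding aseq_def using assms by (intro mult_left_mono sum_le_suminf) (auto intro: less_imp_le)

lemma Iv_Gv_range:
  assumes "\<And>j. l j > 0" "summable l" "2 * suminf l \<le> d"
  shows "Iv l j \<subseteq> {0<..<d}" "Gv l j \<subseteq> {0<..<d}"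
proof -
  have "aseq l (Suc j) \<le> 2 * suminf l" by (rule aseq_bound[OF assms(1,2)])
  then have "aseq l j + 2 * l j \<le> d" using assms(3) by (simp add: aseq_Suc)
  moreover have "0 \<le> aseq l j" by (rule aseq_nonneg[OF assms(1)])
  ultimately show "Iv l j \<subseteq> {0<..<d}" "Gv l j \<subseteq> {0<..<d}"
    using assms(1)[of j] by (auto simp: Iv_def Gv_def)
qed

lemma Eset_range:
  assumes "\<And>j. l j > 0" "summable l" "2 * suminf l \<le> d"
  shows "Eset l \<subseteq> {0<..<d}"
  using Iv_Gv_range[OF assms] by (auto simp: Eset_def)

lemma Eset_open: "open (Eset l)"
  by (auto simp: Eset_def Iv_def)



lemma Wsp_meas:
  assumes "open E"
  shows "set_borel_measurable lebesgue {0<..<1} (indicator E :: real \<Rightarrow> real)"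
    "set_integrable lebesgue {0<..<1} (\<lambda>x. (indicator E x :: real)\<^sup>2)"
proof -
  have [measurable]: "E \<in> sets borel" using assms by auto
  show "set_borel_measurable lebesgue {0<..<1} (indicator E :: real \<Rightarrow> real)"
    unfolding set_borel_measurable_def by (intro measurable_completion) measurable
  have "({0<..<1} \<inter> E) \<in> lmeasurable" using assms by (intro lmeasurable_open) auto
  then have "integrable lebesgue (indicator ({0<..<1} \<inter> E) :: real \<Rightarrow> real)"
    by (simp add: lmeasurable_iff_integrable)
  moreover have "(\<lambda>x. indicator {0<..<1} x *\<^sub>R (indicator E x :: real)\<^sup>2) = indicator ({0<..<1} \<inter> E)"
    by (auto simp: indicator_def)
  ultimately show "set_integrable lebesgue {0<..<1} (\<lambda>x. (indicator E x :: real)\<^sup>2)"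
    unfolding set_integrable_def by simp
qed

lemma pointwise_upper:
  fixes E :: "real set" and q x y :: real
  shows "indicator ({0<..<1} \<times> {0<..<1}) (x, y) *
         ennreal ((indicator E x - indicator E y)\<^sup>2 / \<bar>x - y\<bar> powr q)
    \<le> indicator E x * indicator (- E) y * ennreal (\<bar>x - y\<bar> powr (-q))
      + indicator E y * indicator (- E) x * ennreal (\<bar>y - x\<bar> powr (-q))"
  by (auto simp: indicator_def powr_minus_divide abs_minus_commute)



lemma Wsp_upper:
  fixes l :: "nat \<Rightarrow> real" and s :: real
  assumes pos: "\<And>j. l j > 0" and s: "0 < s" "s < 1/2" and sm: "summable (\<lambda>j. l j powr (1 - 2 * s))"
  shows "(\<integral>\<^sup>+ x. \<integral>\<^sup>+ y. indicator ({0<..<1} \<times> {0<..<1}) (x, y) *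
         ennreal (((indicator (Eset l) x :: real) - indicator (Eset l) y)\<^sup>2 / \<bar>x - y\<bar> powr (1 + 2 * s)) \<partial>lebesgue \<partial>lebesgue) < \<infinity>"
proof -
  define E where "E = Eset l"
  have [measurable]: "E \<in> sets borel" using Eset_open unfolding E_def by auto
  define H where "H x y = indicator E x * indicator (- E) y * ennreal (\<bar>x - y\<bar> powr (-(1 + 2 * s)))" for x y :: real
  have Hm[measurable]: "(\<lambda>(x, y). H x y) \<in> borel_measurable (lborel \<Otimes>\<^sub>M lborel)"
    unfolding H_def by measurable
  define T where "T j x y = indicator (Iv l j) x * indicator (- Iv l j) y * ennreal (\<bar>x - y\<bar> powr (-(1 + 2 * s)))" for j and x y :: real
  have Tm[measurable]: "(\<lambda>(x, y). T j x y) \<in> borel_measurable (lborel \<Otimes>\<^sub>M lborel)" for j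
    unfolding T_def Iv_def by measurable
  have "(\<integral>\<^sup>+ x. \<integral>\<^sup>+ y. indicator ({0<..<1} \<times> {0<..<1}) (x, y) *
         ennreal (((indicator (Eset l) x :: real) - indicator (Eset l) y)\<^sup>2 / \<bar>x - y\<bar> powr (1 + 2 * s)) \<partial>lebesgue \<partial>lebesgue)
      = (\<integral>\<^sup>+ x. \<integral>\<^sup>+ y. indicator ({0<..<1} \<times> {0<..<1}) (x, y) *
         ennreal (((indicator E x :: real) - indicator E y)\<^sup>2 / \<bar>x - y\<bar> powr (1 + 2 * s)) \<partial>lborel \<partial>lborel)"
    by (simp only: nn_integral_completion E_def)
  also have "\<dots> \<le> (\<integral>\<^sup>+ x. \<integral>\<^sup>+ y. H x y + H y x \<partial>lborel \<partial>lborel)"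
    unfolding H_def by (intro nn_integral_mono pointwise_upper)
  also have "\<dots> = (\<integral>\<^sup>+ x. (\<integral>\<^sup>+ y. H x y \<partial>lborel) + (\<integral>\<^sup>+ y. H y x \<partial>lborel) \<partial>lborel)"
    by (intro nn_integral_cong nn_integral_add) measurable
  also have "\<dots> = (\<integral>\<^sup>+ x. \<integral>\<^sup>+ y. H x y \<partial>lborel \<partial>lborel) + (\<integral>\<^sup>+ x. \<integral>\<^sup>+ y. H y x \<partial>lborel \<partial>lborel)"
    by (intro nn_integral_add) measurable
  also have "(\<integral>\<^sup>+ x. \<integral>\<^sup>+ y. H y x \<partial>lborel \<partial>lborel) = (\<integral>\<^sup>+ x. \<integral>\<^sup>+ y. H x y \<partial>lborel \<partial>lborel)"
    by (rule lborel_pair.Fubini') measurable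
  also have "(\<integral>\<^sup>+ x. \<integral>\<^sup>+ y. H x y \<partial>lborel \<partial>lborel) \<le> (\<integral>\<^sup>+ x. \<integral>\<^sup>+ y. (\<Sum>j. T j x y) \<partial>lborel \<partial>lborel)"
  proof (intro nn_integral_mono)
    fix x y :: real
    show "H x y \<le> (\<Sum>j. T j x y)"
    proof (cases "x \<in> E \<and> y \<notin> E")
      case True
      then obtain j where j: "x \<in> Iv l j" unfolding E_def Eset_def by auto
      with True have "y \<notin> Iv l j" unfolding E_def Eset_def by auto
      then have "H x y = T j x y" using True j by (simp add: H_def T_def)
      then show ?thesis using ennreal_term_le_suminf[of "\<lambda>j. T j x y" j] by simp
    qed (auto simp: H_def)
  qed
  also have "\<dots> = (\<integral>\<^sup>+ x. (\<Sum>j. \<integral>\<^sup>+ y. T j x y \<partial>lborel) \<partial>lborel)"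
    by (intro nn_integral_cong nn_integral_suminf) measurable
  also have "\<dots> = (\<Sum>j. \<integral>\<^sup>+ x. \<integral>\<^sup>+ y. T j x y \<partial>lborel \<partial>lborel)"
    by (intro nn_integral_suminf) measurable
  also have "\<dots> \<le> (\<Sum>j. ennreal (l j powr (1 - 2 * s) / (s * (1 - 2 * s))))"
  proof (intro suminf_le summableI)
    fix j
    have "(\<integral>\<^sup>+ x. \<integral>\<^sup>+ y. T j x y \<partial>lborel \<partial>lborel) \<le> ennreal (((aseq l j + l j) - aseq l j) powr (1 - 2 * s) / (s * (1 - 2 * s)))"
      unfolding T_def Iv_def using pos[of j] s by (intro block_upper) auto
    then show "(\<integral>\<^sup>+ x. \<integral>\<^sup>+ y. T j x y \<partial>lborel \<partial>lborel) \<le> ennreal (l j powr (1 - 2 * s) / (s * (1 - 2 * s)))"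
      by simp
  qed
  finally have "(\<integral>\<^sup>+ x. \<integral>\<^sup>+ y. indicator ({0<..<1} \<times> {0<..<1}) (x, y) *
         ennreal (((indicator (Eset l) x :: real) - indicator (Eset l) y)\<^sup>2 / \<bar>x - y\<bar> powr (1 + 2 * s)) \<partial>lebesgue \<partial>lebesgue)
     \<le> (\<Sum>j. ennreal (l j powr (1 - 2 * s) / (s * (1 - 2 * s)))) + (\<Sum>j. ennreal (l j powr (1 - 2 * s) / (s * (1 - 2 * s))))"
    by (simp add: add_mono)
  moreover have "(\<Sum>j. ennreal (l j powr (1 - 2 * s) / (s * (1 - 2 * s)))) \<noteq> top"
    using s by (intro ennreal_suminf_neq_top summable_divide sm) auto
  ultimately show ?thesis by (simp add: less_top order.strict_trans1)
qed



lemma powr_aux: fixes l s :: real assumes "l > 0"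
  shows "(2 * l) powr (-(1 + 2 * s)) * l * l = 2 powr (-(1 + 2 * s)) * l powr (1 - 2 * s)"
proof -
  have "l * l = l powr 2" using assms by (simp add: powr_numeral power2_eq_square)
  then have "(2 * l) powr (-(1 + 2 * s)) * l * l = 2 powr (-(1 + 2 * s)) * (l powr (-(1 + 2 * s)) * l powr 2)"
    using assms by (simp add: powr_mult mult.assoc)
  also have "l powr (-(1 + 2 * s)) * l powr 2 = l powr (1 - 2 * s)"
    by (simp add: powr_add[symmetric])
  finally show ?thesis .
qed

lemma Wsp_lower:
  fixes l :: "nat \<Rightarrow> real" and s :: real
  assumes pos: "\<And>j. l j > 0" and sl: "summable l" "2 * suminf l \<le> 1" and s: "0 < s"
    and nsm: "\<not> summable (\<lambda>j. l j powr (1 - 2 * s))"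
  shows "\<not> (\<integral>\<^sup>+ x. \<integral>\<^sup>+ y. indicator ({0<..<1} \<times> {0<..<1}) (x, y) *
         ennreal (((indicator (Eset l) x :: real) - indicator (Eset l) y)\<^sup>2 / \<bar>x - y\<bar> powr (1 + 2 * s)) \<partial>lebesgue \<partial>lebesgue) < \<infinity>"
proof -
  define E where "E = Eset l"
  have [measurable]: "E \<in> sets borel" using Eset_open unfolding E_def by auto
  define L where "L j x y = indicator (Iv l j) x * indicator (Gv l j) y * ennreal (\<bar>x - y\<bar> powr (-(1 + 2 * s)))" for j and x y :: real
  have Lm[measurable]: "(\<lambda>(x, y). L j x y) \<in> borel_measurable (lborel \<Otimes>\<^sub>M lborel)" for j
    unfolding L_def Iv_def Gv_def by measurable
  have "top = (\<Sum>j. ennreal (2 powr (-(1 + 2 * s)) * l j powr (1 - 2 * s)))"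
  proof (rule sym, rule summable_iff_suminf_neq_top)
    show "\<not> summable (\<lambda>j. 2 powr (-(1 + 2 * s)) * l j powr (1 - 2 * s))"
      using nsm by (simp add: summable_cmult_iff)
  qed simp
  also have "\<dots> \<le> (\<Sum>j. \<integral>\<^sup>+ x. \<integral>\<^sup>+ y. L j x y \<partial>lborel \<partial>lborel)"
  proof (intro suminf_le summableI)
    fix j
    have "ennreal ((2 * ((aseq l j + l j) - aseq l j)) powr (-(1 + 2 * s)) * ((aseq l j + l j) - aseq l j) * ((aseq l j + l j) - aseq l j))
      \<le> (\<integral>\<^sup>+x. \<integral>\<^sup>+y. indicator {aseq l j<..<aseq l j + l j} x * indicator {aseq l j + l j<..<2 * (aseq l j + l j) - aseq l j} y * ennreal (\<bar>x - y\<bar> powr (-(1 + 2 * s))) \<partial>lborel \<partial>lborel)"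
      using pos[of j] s by (intro block_lower) auto
    also have "{aseq l j + l j<..<2 * (aseq l j + l j) - aseq l j} = Gv l j" by (simp add: Gv_def algebra_simps)
    finally show "ennreal (2 powr (-(1 + 2 * s)) * l j powr (1 - 2 * s)) \<le> (\<integral>\<^sup>+ x. \<integral>\<^sup>+ y. L j x y \<partial>lborel \<partial>lborel)"
      using powr_aux[OF pos[of j], of s] by (simp add: L_def Iv_def)
  qed
  also have "\<dots> = (\<integral>\<^sup>+ x. (\<Sum>j. \<integral>\<^sup>+ y. L j x y \<partial>lborel) \<partial>lborel)"
    by (intro nn_integral_suminf[symmetric]) measurable
  also have "\<dots> = (\<integral>\<^sup>+ x. \<integral>\<^sup>+ y. (\<Sum>j. L j x y) \<partial>lborel \<partial>lborel)"
    by (intro nn_integral_cong nn_integral_suminf[symmetric]) measurable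
  also have "\<dots> \<le> (\<integral>\<^sup>+ x. \<integral>\<^sup>+ y. indicator ({0<..<1} \<times> {0<..<1}) (x, y) *
         ennreal (((indicator E x :: real) - indicator E y)\<^sup>2 / \<bar>x - y\<bar> powr (1 + 2 * s)) \<partial>lborel \<partial>lborel)"
  proof (intro nn_integral_mono)
    fix x y :: real
    show "(\<Sum>j. L j x y) \<le> indicator ({0<..<1} \<times> {0<..<1}) (x, y) *
         ennreal (((indicator E x :: real) - indicator E y)\<^sup>2 / \<bar>x - y\<bar> powr (1 + 2 * s))"
    proof (cases "\<exists>j. x \<in> Iv l j")
      case True
      then obtain j where j: "x \<in> Iv l j" by auto
      have "(\<lambda>i. L i x y) = (\<lambda>i. if i = j then L i x y else 0)"
        using Iv_disj[OF pos _ j] by (auto simp: L_def fun_eq_iff)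
      then have "(\<Sum>i. L i x y) = L j x y"
        using sums_unique[OF sums_single[of j "\<lambda>i. L i x y"]] by simp
      also have "L j x y \<le> indicator ({0<..<1} \<times> {0<..<1}) (x, y) *
         ennreal (((indicator E x :: real) - indicator E y)\<^sup>2 / \<bar>x - y\<bar> powr (1 + 2 * s))"
      proof (cases "y \<in> Gv l j")
        case True
        have "x \<in> E" using j unfolding E_def Eset_def by auto
        moreover have "y \<notin> E" using Gv_not_E[OF pos True] unfolding E_def .
        moreover have "x \<in> {0<..<1}" "y \<in> {0<..<1}" using Iv_Gv_range[OF pos sl, of j] j True by auto
        moreover have "\<bar>x - y\<bar> powr (- 1 - 2 * s) = 1 / \<bar>x - y\<bar> powr (1 + 2 * s)"
          using powr_minus_divide[of "\<bar>x - y\<bar>" "1 + 2 * s"] by simp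
        ultimately show ?thesis using j True by (simp add: L_def)
      qed (simp add: L_def)
      finally show ?thesis .
    qed (simp add: L_def)
  qed
  also have "\<dots> = (\<integral>\<^sup>+ x. \<integral>\<^sup>+ y. indicator ({0<..<1} \<times> {0<..<1}) (x, y) *
         ennreal (((indicator (Eset l) x :: real) - indicator (Eset l) y)\<^sup>2 / \<bar>x - y\<bar> powr (1 + 2 * s)) \<partial>lebesgue \<partial>lebesgue)"
    by (simp only: nn_integral_completion E_def)
  finally show ?thesis by (simp add: top_unique)
qed



theorem mainTheorem5:
  fixes n :: nat and s :: real
  assumes "n \<ge> 2" and "0 < s" and "s < 1/2"
  shows "\<exists>g :: real \<Rightarrow> real.
           (\<forall>x\<in>{0..1}. g x \<in> {0..1}) \<and>
           G_class n 1 g \<and>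
           (\<forall>s'. 0 < s' \<and> s' < s \<longrightarrow> in_Wsp s' g) \<and>
           \<not> in_Wsp s g"
proof -
  define p where "p = 1 / (1 - 2 * s)"
  have p1: "p > 1" using assms unfolding p_def by (simp add: field_simps)
  define d :: real where "d = 1 / 2 ^ n"
  have d: "0 < d" "d \<le> 1" unfolding d_def by auto
  define w where "w j = real (Suc j) powr (-p)" for j
  have wpos: "w j > 0" for j unfolding w_def by simp
  have sw: "summable w"
    unfolding w_def using summable_Suc_iff[of "\<lambda>j. real j powr (-p)"] summable_real_powr_iff[of "-p"] p1
    by simp
  define S where "S = suminf w"
  have S: "S > 0" unfolding S_def using sw wpos by (intro suminf_pos) auto
  define c where "c = d / (2 * S)"
  have c: "c > 0" using S d unfolding c_def by auto
  define l where "l j = c * w j" for j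
  have pos: "\<And>j. l j > 0" unfolding l_def using c wpos by auto
  have sl: "summable l" unfolding l_def by (intro summable_mult sw)
  have suml: "2 * suminf l = d" unfolding l_def using suminf_mult[OF sw, of c] S
    by (simp add: c_def S_def)
  have lpow: "l j powr (1 - 2 * t) = c powr (1 - 2 * t) * real (Suc j) powr (-p * (1 - 2 * t))" for j t
    unfolding l_def w_def using c by (simp add: powr_mult powr_powr)
  have summ_iff: "summable (\<lambda>j. l j powr (1 - 2 * t)) \<longleftrightarrow> -p * (1 - 2 * t) < -1" for t
  proof -
    have "summable (\<lambda>j. l j powr (1 - 2 * t)) \<longleftrightarrow> summable (\<lambda>j. real (Suc j) powr (-p * (1 - 2 * t)))"
      unfolding lpow using c by (simp add: summable_cmult_iff)
    also have "\<dots> \<longleftrightarrow> summable (\<lambda>j. real j powr (-p * (1 - 2 * t)))"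
      by (rule summable_Suc_iff)
    also have "\<dots> \<longleftrightarrow> -p * (1 - 2 * t) < -1" by (rule summable_real_powr_iff)
    finally show ?thesis .
  qed
  define g :: "real \<Rightarrow> real" where "g = indicator (Eset l)"
  have Erange: "Eset l \<subseteq> {0<..<d}" using Eset_range[OF pos sl] suml by simp
  have g01: "g x \<in> {0..1}" for x unfolding g_def by (auto simp: indicator_def)
  have ggrid: "g (real i / 2 ^ n) = 0" for i :: nat
  proof -
    have "real i / 2 ^ n \<notin> {0<..<d}"
    proof (cases "i = 0")
      case False
      then have "1 \<le> real i" by simp
      then have "d \<le> real i / 2 ^ n" unfolding d_def by (simp add: divide_right_mono)
      then show ?thesis by auto
    qed simp
    then show ?thesis using Erange unfolding g_def by (auto simp: indicator_def)
  qed
  have "G_class n 1 g"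
    unfolding G_class_def mdeg_le_def
  proof (intro conjI allI impI)
    show "\<exists>c :: nat set \<Rightarrow> real. (\<forall>S. S \<subseteq> {..<n} \<and> card S > 1 \<longrightarrow> c S = 0) \<and>
      (\<forall>b\<in>cube n. angle_map n g b = (\<Sum>S\<in>Pow {..<n}. c S * (\<Prod>j\<in>S. real (b j))))"
      by (rule exI[of _ "\<lambda>_. 0"]) (simp add: angle_map_def ggrid)
  qed (use g01 in auto)
  moreover have "in_Wsp t g" if "0 < t" "t < s" for t
  proof -
    have "summable (\<lambda>j. l j powr (1 - 2 * t))"
      unfolding summ_iff using that assms p1 unfolding p_def by (simp add: field_simps)
    then show ?thesis unfolding in_Wsp_def g_def
      using Wsp_meas[OF Eset_open] Wsp_upper[OF pos that(1)] that assms by auto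
  qed
  moreover have "\<not> in_Wsp s g"
  proof -
    have "\<not> summable (\<lambda>j. l j powr (1 - 2 * s))"
      unfolding summ_iff using assms unfolding p_def by (simp add: field_simps)
    then show ?thesis unfolding in_Wsp_def g_def
      using Wsp_lower[OF pos sl _ assms(2)] suml d by auto
  qed
  ultimately show ?thesis using g01 by blast
qed


end
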